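(* Let $\Lambda\in\{\Lambda_G,\Lambda_U\}$ and assume there exist constants $c_{\mathrm{Fro}},C_{\mathrm{Fro}}>0$ such that $c_{\mathrm{Fro}}\|\mathbf{M}\|_{\mathrm{Fro}}\le\|\mathbf{M}\|_\Lambda\le C_{\mathrm{Fro}}\|\mathbf{M}\|_{\mathrm{Fro}}$ for all $\mathbf{M}\in S_d(\mathbb{R})$. Consider $E=(S_d(\mathbb{R}),\|\cdot\|_{\mathrm{Fro}})$, $F=(S_d(\mathbb{R}),\|\cdot\|_\Lambda)$, $\Omega$ the set of invertible symmetric matrices, $f=\operatorname{inv}:\boldsymbol\Theta\mapsto\boldsymbol\Theta^{-1}$, and $\mathfrak{X}=\mathfrak{S}^{-1}_{k,a,b}=\{\boldsymbol\Theta\in S_d^{++}(\mathbb{R}):\ \|\boldsymbol\Theta\|_0\le d+2k,\ \operatorname{spec}(\boldsymbol\Theta)\subseteq[a,b]\}$ with $0<a\le b$. Then on $\mathfrak{X}$, $f$ is $(\alpha,\beta)$-bi-Lipschitz, i.e. $\alpha\|\boldsymbol\Theta_1-\boldsymbol\Theta_2\|_{\mathrm{Fro}}\le\|\boldsymbol\Theta_1^{-1}-\boldsymbol\Theta_2^{-1}\|_\Lambda\le\beta\|\boldsymbol\Theta_1-\boldsymbol\Theta_2\|_{\mathrm{Fro}}$ for all $\boldsymbol\Theta_1,\boldsymbol\Theta_2\in\mathfrak{X}$; it satisfies $\|f(\boldsymbol\Theta_1)-f(\boldsymbol\Theta_2)-\mathrm{D}f_{\boldsymbol\Theta_2}(\boldsymbol\Theta_1-\boldsymbol\Theta_2)\|_\Lambda\le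 L\|\boldsymbol\Theta_1-\boldsymbol\Theta_2\|_{\mathrm{Fro}}^2$ and $\|\mathrm{D}f_{\boldsymbol\Theta_1}-\mathrm{D}f_{\boldsymbol\Theta_2}\|_{\mathrm{op}}\le\zeta\|\boldsymbol\Theta_1-\boldsymbol\Theta_2\|_{\mathrm{Fro}}$ for all $\boldsymbol\Theta_1,\boldsymbol\Theta_2\in\mathfrak{X}$; with $$\alpha=\frac{c_{\mathrm{Fro}}}{b^2},\quad\beta=\frac{C_{\mathrm{Fro}}}{a^2},\quad L=\frac{C_{\mathrm{Fro}}}{a^3},\quad\zeta=2L.$$
   Context: $S_d(\mathbb{R})$: real symmetric $d\times d$ matrices; $S_d^{++}(\mathbb{R})$: symmetric positive definite ones; $\|\mathbf{M}\|_0$: number of nonzero entries; $\operatorname{spec}$: spectrum. $\Lambda_G=\mathcal{N}(0,\frac1d\mathbf{I}_d)$, $\Lambda_U$ the uniform distribution on $\mathbb{S}^{d-1}$, and $\|\mathbf{M}\|_\Lambda=\mathbb{E}_{\mathbf{a}\sim\Lambda}[|\mathbf{a}^\top\mathbf{M}\mathbf{a}|]$. $\mathrm{D}f_{\boldsymbol\Theta}$ is the differential of the matrix inverse at $\boldsymbol\Theta$, i.e. $\mathbf{H}\mapsto-\boldsymbol\Theta^{-1}\mathbf{H}\boldsymbol\Theta^{-1}$, and $\|T\|_{\mathrm{op}}=\sup_{\|\mathbf{H}\|_{\mathrm{Fro}}\le1}\|T(\mathbf{H})\|_\Lambda$. *)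

theory Defs
  imports "HOL-Probability.Probability"
begin

text \<open>Matrices in S_d(R) are rendered as real^'n^'n, with d = CARD('n).\<close>

definition symmetric_mat :: "real^'n^'n \<Rightarrow> bool" where
  "symmetric_mat M \<longleftrightarrow> transpose M = M"

definition pos_def_mat :: "real^'n^'n \<Rightarrow> bool" where
  "pos_def_mat M \<longleftrightarrow> symmetric_mat M \<and> (\<forall>x. x \<noteq> 0 \<longrightarrow> x \<bullet> (M *v x) > 0)"

definition frob_norm :: "real^'n^'n \<Rightarrow> real" where
  "frob_norm M = sqrt (\<Sum>i\<in>UNIV. \<Sum>j\<in>UNIV. (M $ i $ j)^2)"

definition l0_norm :: "real^'n^'n \<Rightarrow> nat" where
  "l0_norm M = card {(i, j). M $ i $ j \<noteq> 0}"

definition spec :: "real^'n^'n \<Rightarrow> real set" where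
  "spec M = {c. \<exists>v. v \<noteq> 0 \<and> M *v v = c *s v}"

text \<open>Gaussian N(0, (1/d) I_d) on R^d (independent coordinates of standard deviation 1/sqrt d).\<close>
definition Lambda_G :: "(real^'n) measure" where
  "Lambda_G = density lborel
     (\<lambda>x. ennreal (\<Prod>i\<in>UNIV. normal_density 0 (1 / sqrt (real CARD('n))) (x $ i)))"

text \<open>Uniform (normalized surface) measure on the unit sphere, as the cone measure:
  the radial projection of the uniform distribution on the unit ball.\<close>
definition Lambda_U :: "(real^'n) measure" where
  "Lambda_U = distr (uniform_measure lborel (ball 0 1)) borel (\<lambda>x. x /\<^sub>R norm x)"

definition lam_norm :: "(real^'n) measure \<Rightarrow> real^'n^'n \<Rightarrow> real" where
  "lam_norm \<Lambda> M = (\<integral>a. \<bar>a \<bullet> (M *v a)\<bar> \<partial>\<Lambda>)"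

definition Dinv :: "real^'n^'n \<Rightarrow> real^'n^'n \<Rightarrow> real^'n^'n" where
  "Dinv \<Theta> H = - (matrix_inv \<Theta> ** H ** matrix_inv \<Theta>)"

definition op_norm_lam :: "(real^'n) measure \<Rightarrow> (real^'n^'n \<Rightarrow> real^'n^'n) \<Rightarrow> real" where
  "op_norm_lam \<Lambda> T = Sup ((\<lambda>H. lam_norm \<Lambda> (T H)) ` {H. symmetric_mat H \<and> frob_norm H \<le> 1})"

definition S_inv_set :: "nat \<Rightarrow> real \<Rightarrow> real \<Rightarrow> (real^'n^'n) set" where
  "S_inv_set k a b = {\<Theta>. pos_def_mat \<Theta> \<and> l0_norm \<Theta> \<le> CARD('n) + 2 * k \<and> spec \<Theta> \<subseteq> {a..b}}"

end

theory Submission imports Defs begin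

lemma minv: fixes A :: "real^'n^'n" assumes "invertible A"
  shows "A ** matrix_inv A = mat 1" "matrix_inv A ** A = mat 1"
  using someI_ex[OF assms[unfolded invertible_def]] unfolding matrix_inv_def by auto

lemma frob_eq_norm: "frob_norm (M::real^'n^'n) = norm M"
  unfolding frob_norm_def norm_vec_def L2_set_def
  by (simp add: sum_nonneg)

lemma norm_transpose: "norm (transpose (M::real^'n^'n)) = norm M"
  unfolding frob_eq_norm[symmetric] frob_norm_def transpose_def
  by simp (rule sum.swap)

lemma sym_inner: assumes "symmetric_mat (S::real^'n^'n)"
  shows "x \<bullet> (S *v y) = y \<bullet> (S *v x)"
proof -
  have "x \<bullet> (S *v y) = (x v* S) \<bullet> y" by (simp add: dot_lmul_matrix)
  also have "x v* S = transpose S *v x" by simp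
  also have "\<dots> = S *v x" using assms by (simp add: symmetric_mat_def)
  finally show ?thesis by (simp add: inner_commute)
qed

lemma mv_norm: "norm ((M::real^'n^'n) *v x) \<le> norm M * norm x"
proof -
  have "norm (M *v x) = L2_set (\<lambda>i. norm ((M *v x) $ i)) UNIV" by (simp add: norm_vec_def)
  also have "\<dots> \<le> L2_set (\<lambda>i. norm (M $ i) * norm x) UNIV"
    by (rule L2_set_mono) (auto simp: matrix_vector_mul_component Cauchy_Schwarz_ineq2)
  also have "\<dots> = norm M * norm x"
    by (simp add: L2_set_left_distrib[symmetric] norm_vec_def)
  finally show ?thesis .
qed

lemma row_mult: "((X::real^'n^'n) ** A) $ i = transpose A *v (X$i)"
  by (simp add: vec_eq_iff matrix_matrix_mult_def matrix_vector_mult_def transpose_def mult.commute)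

definition opb :: "real^'n^'n \<Rightarrow> real \<Rightarrow> bool" where
  "opb A c \<longleftrightarrow> (\<forall>x. norm (A *v x) \<le> c * norm x)"

lemma right_mult: fixes X :: "real^'n^'n" assumes "symmetric_mat A" "opb A c" "c \<ge> 0"
  shows "norm (X ** A) \<le> c * norm X"
proof -
  have r: "\<And>i. (X ** A) $ i = A *v (X$i)"
    using assms(1) by (simp add: row_mult symmetric_mat_def)
  have "norm (X ** A) = L2_set (\<lambda>i. norm ((X ** A) $ i)) UNIV" by (fact norm_vec_def)
  also have "\<dots> = L2_set (\<lambda>i. norm (A *v (X$i))) UNIV" by (simp only: r)
  also have "\<dots> \<le> L2_set (\<lambda>i. c * norm (X$i)) UNIV"
    by (rule L2_set_mono) (use assms(2) in \<open>auto simp: opb_def\<close>)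
  also have "\<dots> = c * norm X"
    using assms(3) by (simp add: L2_set_right_distrib[symmetric] norm_vec_def[of X])
  finally show ?thesis .
qed

lemma left_mult: fixes X :: "real^'n^'n" assumes "symmetric_mat A" "opb A c" "c \<ge> 0"
  shows "norm (A ** X) \<le> c * norm X"
proof -
  have "norm (A ** X) = norm (transpose X ** A)"
    using assms(1) norm_transpose[of "A ** X"]
    by (simp add: matrix_transpose_mul symmetric_mat_def)
  also have "\<dots> \<le> c * norm (transpose X)" by (rule right_mult[OF assms])
  finally show ?thesis by (simp add: norm_transpose)
qed

lemma opb_norm: "opb A (norm A)"
  unfolding opb_def using mv_norm by blast

lemma sym_diff: "symmetric_mat A \<Longrightarrow> symmetric_mat B \<Longrightarrow> symmetric_mat (A - B)"
  unfolding symmetric_mat_def by (simp add: vec_eq_iff transpose_def)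
lemma sym_add: "symmetric_mat A \<Longrightarrow> symmetric_mat B \<Longrightarrow> symmetric_mat (A + B)"
  unfolding symmetric_mat_def by (simp add: vec_eq_iff transpose_def)
lemma sym_neg: "symmetric_mat A \<Longrightarrow> symmetric_mat (- A)"
  unfolding symmetric_mat_def by (simp add: vec_eq_iff transpose_def)
lemma sym_sandwich: "symmetric_mat (P::real^'n^'n) \<Longrightarrow> symmetric_mat X \<Longrightarrow> symmetric_mat (P ** X ** P)"
  unfolding symmetric_mat_def by (simp add: matrix_transpose_mul matrix_mul_assoc)
lemma sym_zero: "symmetric_mat 0"
  unfolding symmetric_mat_def by (simp add: vec_eq_iff transpose_def)

lemma quad_expand: assumes "symmetric_mat (S::real^'n^'n)"
  shows "(x + t *\<^sub>R y) \<bullet> (S *v (x + t *\<^sub>R y)) = x \<bullet> (S *v x) + 2 * t * (x \<bullet> (S *v y)) + t^2 * (y \<bullet> (S *v y))"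
proof -
  have l: "S *v (x + t *\<^sub>R y) = S *v x + t *\<^sub>R (S *v y)"
    by (simp add: matrix_vector_right_distrib matrix_vector_mult_scaleR)
  show ?thesis unfolding l using sym_inner[OF assms, of y x]
    by (simp add: inner_add_left inner_add_right algebra_simps power2_eq_square)
qed

lemma real_aux: fixes c d t :: real
  assumes "c \<ge> 0" "2*t*c + t^2*d \<le> 0" "t = c/(\<bar>d\<bar>+1)" shows "c = 0"
proof -
  define e where "e = \<bar>d\<bar>+1"
  have p: "e > 0" unfolding e_def by simp
  have te: "t * e = c" using p unfolding assms(3) e_def by simp
  have "(2*t*c + t^2*d) * e^2 \<le> 0"
    using assms(2) by (simp add: mult_nonpos_nonneg)
  moreover have "(2*t*c + t^2*d) * e^2 = 2*c*(t * e)*e + (t * e)^2 * d"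
    by (simp add: algebra_simps power2_eq_square)
  ultimately have "c^2 * (2*e + d) \<le> 0"
    unfolding te by (simp add: algebra_simps power2_eq_square)
  moreover have "2*e + d > 0" unfolding e_def by (simp add: abs_if)
  ultimately have "c^2 \<le> 0" by (simp add: mult_le_0_iff)
  then show ?thesis by simp
qed

lemma quad_scale: "(c *\<^sub>R x) \<bullet> ((S::real^'n^'n) *v (c *\<^sub>R x)) = c^2 * (x \<bullet> (S *v x))"
  by (simp add: matrix_vector_mult_scaleR power2_eq_square)

lemma max_eig: fixes S :: "real^'n^'n" assumes S: "symmetric_mat S"
  shows "\<exists>l v. v \<noteq> 0 \<and> S *v v = l *s v \<and> (\<forall>x. x \<bullet> (S *v x) \<le> l * (norm x)^2)"
proof -
  let ?q = "\<lambda>x. x \<bullet> (S *v x)"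
  have ne: "sphere (0::real^'n) 1 \<noteq> {}"
    using norm_axis_1[of undefined] by (metis mem_sphere_0 empty_iff)
  have cont: "continuous_on (sphere 0 1) ?q"
    by (intro continuous_intros linear_continuous_on matrix_vector_mul_bounded_linear)
  obtain v where v: "v \<in> sphere 0 1" "\<And>y. y \<in> sphere 0 1 \<Longrightarrow> ?q y \<le> ?q v"
    using continuous_attains_sup[OF compact_sphere ne cont] by blast
  define l where "l = ?q v"
  have nv: "norm v = 1" using v(1) by simp
  have vv: "v \<bullet> v = 1" by (metis power2_norm_eq_inner nv one_power2)
  have all: "?q x \<le> l * (norm x)^2" for x
  proof (cases "x = 0")
    case True then show ?thesis by simp
  next
    case False
    then have nx: "norm x > 0" by simp
    let ?u = "(1 / norm x) *\<^sub>R x"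
    have "?u \<in> sphere 0 1" using nx by simp
    then have "?q ?u \<le> l" using v(2) l_def by blast
    then have "(1/norm x)^2 * ?q x \<le> l" by (simp only: quad_scale)
    then have "?q x \<le> l * (norm x)^2" using nx by (simp add: field_simps power2_eq_square)
    then show ?thesis .
  qed
  define w where "w = S *v v - l *\<^sub>R v"
  define c where "c = w \<bullet> w"
  define d where "d = ?q w - l * c"
  define t where "t = c / (\<bar>d\<bar>+1)"
  have "?q (v + t *\<^sub>R w) \<le> l * (norm (v + t *\<^sub>R w))^2" by (rule all)
  moreover have "?q (v + t *\<^sub>R w) = l + 2*t*(v \<bullet> (S *v w)) + t^2 * ?q w"
    using quad_expand[OF S] l_def by simp
  moreover have "(norm (v + t *\<^sub>R w))^2 = 1 + 2*t*(v \<bullet> w) + t^2 * c"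
    using vv unfolding power2_norm_eq_inner c_def
    by (simp add: inner_add_left inner_add_right inner_commute power2_eq_square algebra_simps)
  moreover have "v \<bullet> (S *v w) = w \<bullet> (S *v v)" by (rule sym_inner[OF S])
  moreover have "w \<bullet> (S *v v) = c + l * (v \<bullet> w)"
    unfolding c_def by (simp add: w_def inner_diff_left inner_diff_right inner_commute algebra_simps)
  ultimately have "2*t*c + t^2*d \<le> 0"
    unfolding d_def by (simp add: algebra_simps)
  then have "c = 0" using real_aux[of c t d] t_def c_def by simp
  then have "w = 0" unfolding c_def by simp
  then have "S *v v = l *s v" unfolding w_def by (simp add: scalar_mult_eq_scaleR)
  moreover have "v \<noteq> 0" using nv by auto
  ultimately show ?thesis using all by blast
qed

lemma psd_cs: fixes S :: "real^'n^'n" assumes S: "symmetric_mat S" and psd: "\<And>z. 0 \<le> z \<bullet> (S *v z)"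
  shows "(x \<bullet> (S *v y))^2 \<le> (x \<bullet> (S *v x)) * (y \<bullet> (S *v y))"
proof -
  define A where "A = x \<bullet> (S *v x)"
  define B where "B = x \<bullet> (S *v y)"
  define C where "C = y \<bullet> (S *v y)"
  have f: "0 \<le> A + 2*t*B + t^2*C" for t
    using psd[of "x + t *\<^sub>R y"] quad_expand[OF S, of x t y] A_def B_def C_def by simp
  have C0: "C \<ge> 0" using psd C_def by simp
  show ?thesis
  proof (cases "C = 0")
    case True
    have "B = 0"
    proof (rule ccontr)
      assume "B \<noteq> 0"
      have "0 \<le> A + 2*(-(A+1)/(2*B))*B + (-(A+1)/(2*B))^2*C" by (rule f)
      then show False using \<open>B \<noteq> 0\<close> True by (simp add: field_simps)
    qed
    then show ?thesis using True A_def B_def C_def by simp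
  next
    case False
    then have Cp: "C > 0" using C0 by simp
    have "0 \<le> A + 2*(-B/C)*B + (-B/C)^2*C" by (rule f)
    also have "\<dots> = A - B^2/C" using Cp by (simp add: field_simps power2_eq_square)
    finally have "B^2/C \<le> A" by simp
    then have "B^2 \<le> A * C" using Cp by (simp add: divide_le_eq)
    then show ?thesis using A_def B_def C_def by simp
  qed
qed

lemma spd_bounds: fixes T :: "real^'n^'n"
  assumes pd: "pos_def_mat T" and sp: "spec T \<subseteq> {a..b}" and a: "a > 0"
  shows "symmetric_mat T" "opb T b" "\<And>x. a * norm x \<le> norm (T *v x)" "invertible T"
    "symmetric_mat (matrix_inv T)" "opb (matrix_inv T) (1/a)"
proof -
  show S: "symmetric_mat T" using pd pos_def_mat_def by blast
  obtain l v where lv: "v \<noteq> 0" "T *v v = l *s v" "\<And>x. x \<bullet> (T *v x) \<le> l * (norm x)^2"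
    using max_eig[OF S] by blast
  have "l \<in> spec T" unfolding spec_def using lv by blast
  then have lb: "l \<le> b" using sp by auto
  have up: "x \<bullet> (T *v x) \<le> b * (norm x)^2" for x
    using lv(3)[of x] lb by (meson mult_right_mono order_trans zero_le_power2)
  obtain m w where mw: "w \<noteq> 0" "(-T) *v w = m *s w" "\<And>x. x \<bullet> ((-T) *v x) \<le> m * (norm x)^2"
    using max_eig[OF sym_neg[OF S]] by blast
  have "T *v w = (-m) *s w" using mw(2)
    by (simp add: vec_eq_iff matrix_vector_mult_def sum_negf) (metis minus_equation_iff)
  then have "-m \<in> spec T" unfolding spec_def using mw by blast
  then have ma: "a \<le> -m" using sp by auto
  have low: "a * (norm x)^2 \<le> x \<bullet> (T *v x)" for x
  proof -
    have "x \<bullet> ((-T) *v x) = - (x \<bullet> (T *v x))"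
      by (simp add: matrix_vector_mult_def inner_vec_def sum_negf)
    then have "-(x \<bullet> (T *v x)) \<le> m * (norm x)^2" using mw(3)[of x] by simp
    moreover have "a * (norm x)^2 \<le> (-m) * (norm x)^2" using ma by (intro mult_right_mono) auto
    ultimately show ?thesis by simp
  qed
  show lowv: "a * norm x \<le> norm (T *v x)" for x
  proof (cases "x = 0")
    case True then show ?thesis by simp
  next
    case False
    have "a * (norm x)^2 \<le> norm x * norm (T *v x)"
      using low[of x] Cauchy_Schwarz_ineq2[of x "T *v x"] by linarith
    then show ?thesis using False by (simp add: power2_eq_square mult.assoc)
  qed
  have psd: "0 \<le> z \<bullet> (T *v z)" for z
    using low[of z] a by (meson order_trans mult_nonneg_nonneg less_imp_le zero_le_power2)
  have b0: "b \<ge> 0" using a ma mw lb sp \<open>l \<in> spec T\<close> by auto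
  show "opb T b" unfolding opb_def
  proof
    fix x
    let ?y = "T *v x"
    have e: "x \<bullet> (T *v ?y) = ?y \<bullet> ?y" using sym_inner[OF S, of x ?y] by simp
    have "(?y \<bullet> ?y)^2 \<le> (x \<bullet> (T *v x)) * (?y \<bullet> (T *v ?y))"
      using psd_cs[OF S psd, of x ?y] e by simp
    also have "\<dots> \<le> (b * (norm x)^2) * (b * (norm ?y)^2)"
      by (intro mult_mono up psd) (use b0 in auto)
    finally have "(norm ?y)^2 * (norm ?y)^2 \<le> (b * norm x)^2 * (norm ?y)^2"
      by (simp add: power2_norm_eq_inner[symmetric] power2_eq_square algebra_simps)
    then have "(norm ?y)^2 \<le> (b * norm x)^2"
    proof (cases "norm ?y = 0")
      case False
      then have "(norm ?y)^2 > 0" by simp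
      then show ?thesis using \<open>(norm ?y)^2 * (norm ?y)^2 \<le> (b * norm x)^2 * (norm ?y)^2\<close>
        by (meson mult_right_le_imp_le)
    qed simp
    then show "norm ?y \<le> b * norm x" using b0 by (simp add: power2_le_iff_abs_le)
  qed
  have "\<forall>x. T *v x = 0 \<longrightarrow> x = 0"
    using lowv a by (metis mult_le_0_iff norm_eq_zero norm_le_zero_iff norm_zero not_less)
  then show inv: "invertible T"
    using matrix_left_invertible_ker invertible_left_inverse by blast
  note mi = minv[OF inv]
  show "symmetric_mat (matrix_inv T)" unfolding symmetric_mat_def
  proof -
    have "transpose (matrix_inv T) ** T = mat 1"
      using arg_cong[OF mi(1), of transpose] S by (simp add: matrix_transpose_mul symmetric_mat_def)
    then have "transpose (matrix_inv T) = transpose (matrix_inv T) ** (T ** matrix_inv T)"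
      using mi by simp
    also have "\<dots> = matrix_inv T"
      by (simp add: matrix_mul_assoc \<open>transpose (matrix_inv T) ** T = mat 1\<close>)
    finally show "transpose (matrix_inv T) = matrix_inv T" .
  qed
  show "opb (matrix_inv T) (1/a)" unfolding opb_def
  proof
    fix y
    have "a * norm (matrix_inv T *v y) \<le> norm (T *v (matrix_inv T *v y))" by (rule lowv)
    also have "T *v (matrix_inv T *v y) = y" using mi by (simp add: matrix_vector_mul_assoc)
    finally show "norm (matrix_inv T *v y) \<le> 1 / a * norm y" using a by (simp add: field_simps)
  qed
qed

lemma mm_sub_l: "(A::real^'n^'n) ** (B - C) = A ** B - A ** C"
  by (simp add: vec_eq_iff matrix_matrix_mult_def sum_subtractf algebra_simps)
lemma mm_sub_r: "((A::real^'n^'n) - B) ** C = A ** C - B ** C"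
  by (simp add: vec_eq_iff matrix_matrix_mult_def sum_subtractf algebra_simps)
lemma mm_neg_l: "(- (A::real^'n^'n)) ** B = - (A ** B)"
  by (simp add: vec_eq_iff matrix_matrix_mult_def sum_negf)
lemma mm_neg_r: "(A::real^'n^'n) ** (- B) = - (A ** B)"
  by (simp add: vec_eq_iff matrix_matrix_mult_def sum_negf)

theorem lemma1:
  fixes \<Lambda> :: "(real^'n) measure" and cF CF a b :: real and k :: nat
  assumes "\<Lambda> \<in> {Lambda_G, Lambda_U}"
    and "cF > 0" and "CF > 0"
    and "\<forall>M :: real^'n^'n. symmetric_mat M \<longrightarrow>
           cF * frob_norm M \<le> lam_norm \<Lambda> M \<and> lam_norm \<Lambda> M \<le> CF * frob_norm M"
    and "0 < a" and "a \<le> b"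
  shows "\<forall>\<Theta>1 \<in> S_inv_set k a b. \<forall>\<Theta>2 \<in> S_inv_set k a b.
           (cF / b^2) * frob_norm (\<Theta>1 - \<Theta>2) \<le> lam_norm \<Lambda> (matrix_inv \<Theta>1 - matrix_inv \<Theta>2)
         \<and> lam_norm \<Lambda> (matrix_inv \<Theta>1 - matrix_inv \<Theta>2) \<le> (CF / a^2) * frob_norm (\<Theta>1 - \<Theta>2)
         \<and> lam_norm \<Lambda> (matrix_inv \<Theta>1 - matrix_inv \<Theta>2 - Dinv \<Theta>2 (\<Theta>1 - \<Theta>2))
             \<le> (CF / a^3) * (frob_norm (\<Theta>1 - \<Theta>2))^2
         \<and> op_norm_lam \<Lambda> (\<lambda>H. Dinv \<Theta>1 H - Dinv \<Theta>2 H)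
             \<le> (2 * (CF / a^3)) * frob_norm (\<Theta>1 - \<Theta>2)"
proof (intro ballI)
  fix T1 T2 :: "real^'n^'n"
  assume h1: "T1 \<in> S_inv_set k a b" and h2: "T2 \<in> S_inv_set k a b"
  have a0: "a > 0" using assms(5) .
  have b0: "b > 0" using assms(5,6) by simp
  have cF: "cF > 0" and CF: "CF > 0" using assms(2,3) .
  have lamb: "\<And>M. symmetric_mat M \<Longrightarrow> cF * norm M \<le> lam_norm \<Lambda> M"
    "\<And>M. symmetric_mat M \<Longrightarrow> lam_norm \<Lambda> M \<le> CF * norm M"
    using assms(4) by (simp_all add: frob_eq_norm)
  have pd1: "pos_def_mat T1" "spec T1 \<subseteq> {a..b}" using h1 by (simp_all add: S_inv_set_def)
  have pd2: "pos_def_mat T2" "spec T2 \<subseteq> {a..b}" using h2 by (simp_all add: S_inv_set_def)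
  note B1 = spd_bounds[OF pd1 a0]
  note B2 = spd_bounds[OF pd2 a0]
  define P1 where "P1 = matrix_inv T1"
  define P2 where "P2 = matrix_inv T2"
  define \<Delta> where "\<Delta> = T1 - T2"
  define D where "D = P1 - P2"
  have ia: "1/a \<ge> 0" using a0 by simp
  have sP1: "symmetric_mat P1" and oP1: "opb P1 (1/a)" using B1 P1_def by auto
  have sP2: "symmetric_mat P2" and oP2: "opb P2 (1/a)" using B2 P2_def by auto
  have sT1: "symmetric_mat T1" and oT1: "opb T1 b" using B1 by auto
  have sT2: "symmetric_mat T2" and oT2: "opb T2 b" using B2 by auto
  have m1: "T1 ** P1 = mat 1" "P1 ** T1 = mat 1" using minv[OF B1(4)] P1_def by auto
  have m2: "T2 ** P2 = mat 1" "P2 ** T2 = mat 1" using minv[OF B2(4)] P2_def by auto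
  have sD: "symmetric_mat D" unfolding D_def by (rule sym_diff[OF sP1 sP2])
  have s\<Delta>: "symmetric_mat \<Delta>" unfolding \<Delta>_def by (rule sym_diff[OF sT1 sT2])
  have id1: "P2 - P1 = P1 ** \<Delta> ** P2"
  proof -
    have "P1 ** \<Delta> ** P2 = (P1 ** T1) ** P2 - P1 ** (T2 ** P2)"
      unfolding \<Delta>_def by (simp add: mm_sub_l mm_sub_r matrix_mul_assoc)
    then show ?thesis using m1 m2 by simp
  qed
  have id2: "\<Delta> = T1 ** (P2 - P1) ** T2"
  proof -
    have "T1 ** (P2 - P1) ** T2 = T1 ** (P2 ** T2) - (T1 ** P1) ** T2"
      by (simp add: mm_sub_l mm_sub_r matrix_mul_assoc)
    then show ?thesis using m1 m2 \<Delta>_def by simp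
  qed
  have nD: "norm D \<le> norm \<Delta> / a^2"
  proof -
    have "norm D = norm (P2 - P1)" unfolding D_def by (rule norm_minus_commute)
    also have "\<dots> = norm (P1 ** (\<Delta> ** P2))" by (simp add: id1 matrix_mul_assoc)
    also have "\<dots> \<le> (1/a) * norm (\<Delta> ** P2)" by (rule left_mult[OF sP1 oP1 ia])
    also have "\<dots> \<le> (1/a) * ((1/a) * norm \<Delta>)"
      by (rule mult_left_mono[OF right_mult[OF sP2 oP2 ia] ia])
    finally show ?thesis by (simp add: power2_eq_square)
  qed
  have n\<Delta>: "norm \<Delta> \<le> b^2 * norm D"
  proof -
    have "norm \<Delta> = norm (T1 ** ((P2 - P1) ** T2))" using id2 by (simp add: matrix_mul_assoc)
    also have "\<dots> \<le> b * norm ((P2 - P1) ** T2)" by (rule left_mult[OF sT1 oT1]) (use b0 in simp)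
    also have "\<dots> \<le> b * (b * norm (P2 - P1))"
      by (rule mult_left_mono[OF right_mult[OF sT2 oT2]]) (use b0 in simp_all)
    also have "norm (P2 - P1) = norm D" unfolding D_def by (rule norm_minus_commute)
    finally show ?thesis by (simp add: power2_eq_square)
  qed
  have part1: "(cF / b^2) * norm \<Delta> \<le> lam_norm \<Lambda> D"
  proof -
    have "(cF / b^2) * norm \<Delta> \<le> (cF / b^2) * (b^2 * norm D)"
      using n\<Delta> cF by (intro mult_left_mono) auto
    also have "\<dots> = cF * norm D" using b0 by simp
    also have "\<dots> \<le> lam_norm \<Lambda> D" by (rule lamb(1)[OF sD])
    finally show ?thesis .
  qed
  have part2: "lam_norm \<Lambda> D \<le> (CF / a^2) * norm \<Delta>"
  proof -
    have "lam_norm \<Lambda> D \<le> CF * norm D" by (rule lamb(2)[OF sD])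
    also have "\<dots> \<le> CF * (norm \<Delta> / a^2)" using nD CF by (intro mult_left_mono) auto
    finally show ?thesis by simp
  qed
  define E where "E = matrix_inv T1 - matrix_inv T2 - Dinv T2 (T1 - T2)"
  have E1: "E = D + P2 ** \<Delta> ** P2"
    unfolding E_def D_def Dinv_def P1_def P2_def \<Delta>_def by simp
  have sE: "symmetric_mat E" unfolding E1 by (rule sym_add[OF sD sym_sandwich[OF sP2 s\<Delta>]])
  have E2: "E = P1 ** (\<Delta> ** (P2 ** \<Delta>)) ** P2"
  proof -
    have hD: "D = - (P1 ** \<Delta> ** P2)" unfolding D_def using id1 by (metis minus_diff_eq)
    have "E = (P2 - P1) ** \<Delta> ** P2"
      unfolding E1 hD by (simp add: mm_sub_r id1[symmetric])
    also have "\<dots> = P1 ** (\<Delta> ** (P2 ** \<Delta>)) ** P2" by (simp add: id1 matrix_mul_assoc)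
    finally show ?thesis .
  qed
  have nE: "norm E \<le> (norm \<Delta>)^2 / a^3"
  proof -
    have "norm E = norm (P1 ** ((\<Delta> ** (P2 ** \<Delta>)) ** P2))" by (simp add: E2 matrix_mul_assoc)
    also have "\<dots> \<le> (1/a) * norm ((\<Delta> ** (P2 ** \<Delta>)) ** P2)" by (rule left_mult[OF sP1 oP1 ia])
    also have "\<dots> \<le> (1/a) * ((1/a) * norm (\<Delta> ** (P2 ** \<Delta>)))"
      by (rule mult_left_mono[OF right_mult[OF sP2 oP2 ia] ia])
    also have "\<dots> \<le> (1/a) * ((1/a) * (norm \<Delta> * norm (P2 ** \<Delta>)))"
      by (intro mult_left_mono left_mult[OF s\<Delta> opb_norm] ia) auto
    also have "\<dots> \<le> (1/a) * ((1/a) * (norm \<Delta> * ((1/a) * norm \<Delta>)))"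
      by (intro mult_left_mono left_mult[OF sP2 oP2] ia) auto
    finally show ?thesis by (simp add: power2_eq_square power3_eq_cube)
  qed
  have part3: "lam_norm \<Lambda> E \<le> (CF / a^3) * (norm \<Delta>)^2"
  proof -
    have "lam_norm \<Lambda> E \<le> CF * norm E" by (rule lamb(2)[OF sE])
    also have "\<dots> \<le> CF * ((norm \<Delta>)^2 / a^3)" using nE CF by (intro mult_left_mono) auto
    finally show ?thesis by simp
  qed
  have part4: "op_norm_lam \<Lambda> (\<lambda>H. Dinv T1 H - Dinv T2 H) \<le> (2 * (CF / a^3)) * norm \<Delta>"
    unfolding op_norm_lam_def
  proof (rule cSup_least)
    show "(\<lambda>H. lam_norm \<Lambda> (Dinv T1 H - Dinv T2 H)) ` {H. symmetric_mat H \<and> frob_norm H \<le> 1} \<noteq> {}"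
      using sym_zero by (auto simp: frob_eq_norm)
  next
    fix y assume "y \<in> (\<lambda>H. lam_norm \<Lambda> (Dinv T1 H - Dinv T2 H)) ` {H. symmetric_mat H \<and> frob_norm H \<le> 1}"
    then obtain H where H: "symmetric_mat H" "norm H \<le> 1" and y: "y = lam_norm \<Lambda> (Dinv T1 H - Dinv T2 H)"
      by (auto simp: frob_eq_norm)
    have F: "Dinv T1 H - Dinv T2 H = - (D ** H ** P1 + P2 ** H ** D)"
      unfolding Dinv_def D_def P1_def P2_def
      by (simp add: mm_sub_l mm_sub_r matrix_mul_assoc)
    have sF: "symmetric_mat (Dinv T1 H - Dinv T2 H)"
      unfolding Dinv_def P1_def[symmetric] P2_def[symmetric]
      by (intro sym_diff sym_neg sym_sandwich sP1 sP2 H(1))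
    have nH: "norm H \<ge> 0" by simp
    have "norm (Dinv T1 H - Dinv T2 H) \<le> norm (D ** H ** P1) + norm (P2 ** H ** D)"
      unfolding F norm_minus_cancel by (rule norm_triangle_ineq)
    also have "norm (D ** H ** P1) \<le> (1/a) * (norm D * norm H)"
    proof -
      have "norm (D ** H ** P1) \<le> (1/a) * norm (D ** H)" by (rule right_mult[OF sP1 oP1 ia])
      also have "\<dots> \<le> (1/a) * (norm D * norm H)"
        by (intro mult_left_mono left_mult[OF sD opb_norm] ia) auto
      finally show ?thesis .
    qed
    also have "norm (P2 ** H ** D) \<le> (1/a) * (norm D * norm H)"
    proof -
      have "norm (P2 ** H ** D) \<le> norm D * norm (P2 ** H)" by (rule right_mult[OF sD opb_norm]) simp
      also have "\<dots> \<le> norm D * ((1/a) * norm H)"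
        by (intro mult_left_mono right_mult[OF H(1)] left_mult[OF sP2 oP2] ia) auto
      finally show ?thesis by simp
    qed
    finally have "norm (Dinv T1 H - Dinv T2 H) \<le> 2 * ((1/a) * (norm D * norm H))" by simp
    also have "\<dots> \<le> 2 * ((1/a) * (norm \<Delta> / a^2 * 1))"
      using nD H(2) ia by (intro mult_left_mono mult_mono) auto
    finally have nF: "norm (Dinv T1 H - Dinv T2 H) \<le> 2 * (norm \<Delta> / a^3)"
      by (simp add: power2_eq_square power3_eq_cube)
    have "y \<le> CF * norm (Dinv T1 H - Dinv T2 H)" unfolding y by (rule lamb(2)[OF sF])
    also have "\<dots> \<le> CF * (2 * (norm \<Delta> / a^3))" using nF CF by (intro mult_left_mono) auto
    finally show "y \<le> (2 * (CF / a^3)) * norm \<Delta>" by (simp add: mult.commute mult.left_commute)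
  qed
  show "(cF / b^2) * frob_norm (T1 - T2) \<le> lam_norm \<Lambda> (matrix_inv T1 - matrix_inv T2)
         \<and> lam_norm \<Lambda> (matrix_inv T1 - matrix_inv T2) \<le> (CF / a^2) * frob_norm (T1 - T2)
         \<and> lam_norm \<Lambda> (matrix_inv T1 - matrix_inv T2 - Dinv T2 (T1 - T2))
             \<le> (CF / a^3) * (frob_norm (T1 - T2))^2
         \<and> op_norm_lam \<Lambda> (\<lambda>H. Dinv T1 H - Dinv T2 H)
             \<le> (2 * (CF / a^3)) * frob_norm (T1 - T2)"
    using part1 part2 part3 part4 unfolding frob_eq_norm E_def D_def \<Delta>_def P1_def P2_def by simp
qed

end
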